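(* Suppose there exists a constant $C$ such that for all positive integers $k$ we have $\mathrm{LCS}_2(2k,\mathcal P_k)\leq Ck^{1/3}$. Then for all $k\geq 2$, $\mathrm{LT}(k,n)\leq 6Ck^{-2/3}n+o(n)$ as $n\to\infty$.
   Context: $\mathcal{P}_k$ is the set of permutations on $k$ letters (words over $[k]=\{1,\dots,k\}$ in which each letter occurs exactly once). $\mathrm{LCS}(w,w')$ is the length of a longest common subsequence of words $w,w'$; $\mathrm{LCS}_2(t,\mathcal P_k)$ is the minimum, over sets of $t$ distinct permutations in $\mathcal P_k$, of the maximum $\mathrm{LCS}$ of two distinct members. Two subsequences of a word $w$ are twins if they are equal as words and use disjoint sets of positions of $w$; $\mathrm{LT}(w)$ is the maximum length of twins in $w$ and $\mathrm{LT}(k,n)=\min_{w\in[k]^n}\mathrm{LT}(w)$. *)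

theory Defs
  imports Complex_Main "HOL-Library.Sublist" "HOL-Library.Landau_Symbols"
begin

definition perms :: "nat \<Rightarrow> nat list set" where
  "perms k = {w. distinct w \<and> set w = {1..k}}"

definition LCS :: "nat list \<Rightarrow> nat list \<Rightarrow> nat" where
  "LCS w w' = Max {length u | u. subseq u w \<and> subseq u w'}"

definition LCS2_perms :: "nat \<Rightarrow> nat \<Rightarrow> nat" where
  "LCS2_perms t k = Min {Max {LCS p q | p q. p \<in> S \<and> q \<in> S \<and> p \<noteq> q} | S.
       S \<subseteq> perms k \<and> card S = t}"

definition twins_len :: "nat list \<Rightarrow> nat set" where
  "twins_len w = {card I | I J. I \<subseteq> {..<length w} \<and> J \<subseteq> {..<length w} \<and>
       I \<inter> J = {} \<and> nths w I = nths w J}"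

definition LT :: "nat list \<Rightarrow> nat" where
  "LT w = Max (twins_len w)"

definition LT_kn :: "nat \<Rightarrow> nat \<Rightarrow> nat" where
  "LT_kn k n = Min {LT w | w. length w = n \<and> set w \<subseteq> {1..k}}"

end

theory Submission
  imports Defs "HOL-Combinatorics.Multiset_Permutations"
begin

definition schain :: "(nat \<times> nat) set \<Rightarrow> bool" where
  "schain P \<longleftrightarrow> (\<forall>p\<in>P. \<forall>q\<in>P. p \<noteq> q \<longrightarrow>
      (fst p < fst q \<and> snd p < snd q) \<or> (fst q < fst p \<and> snd q < snd p))"

definition saln :: "nat list \<Rightarrow> (nat \<times> nat) set \<Rightarrow> bool" where
  "saln w P \<longleftrightarrow> finite P \<and> (\<forall>(i,j)\<in>P. i < length w \<and> j < length w \<and> i \<noteq> j \<and> w!i = w!j)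
      \<and> schain P"

lemma nths_idx: "nths xs I = map (nth xs) (filter (\<lambda>i. i \<in> I) [0..<length xs])"
proof (induction xs rule: rev_induct)
  case Nil then show ?case by simp
next
  case (snoc x xs)
  have "map (nth (xs @ [x])) (filter (\<lambda>i. i \<in> I) [0..<length xs]) = map (nth xs) (filter (\<lambda>i. i \<in> I) [0..<length xs])"
    by (rule map_cong) (auto simp: nth_append)
  with snoc show ?case by (simp add: nths_append)
qed

lemma twins_saln:
  assumes "I \<subseteq> {..<length w}" "J \<subseteq> {..<length w}" "I \<inter> J = {}" "nths w I = nths w J"
  shows "\<exists>P. saln w P \<and> card P = card I"
proof -
  define a where "a = filter (\<lambda>i. i \<in> I) [0..<length w]"
  define b where "b = filter (\<lambda>i. i \<in> J) [0..<length w]"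
  have mab: "map (nth w) a = map (nth w) b" using assms(4) by (simp add: nths_idx a_def b_def)
  hence lab: "length a = length b" by (metis length_map)
  have la: "length a = card I"
  proof -
    have "length a = length (nths w I)" by (simp add: nths_idx a_def)
    also have "\<dots> = card {i. i < length w \<and> i \<in> I}" by (rule length_nths)
    also have "{i. i < length w \<and> i \<in> I} = I" using assms(1) by auto
    finally show ?thesis .
  qed
  have sa: "sorted_wrt (<) a" unfolding a_def by (simp add: sorted_wrt_filter)
  have sb: "sorted_wrt (<) b" unfolding b_def by (simp add: sorted_wrt_filter)
  have da: "distinct a" unfolding a_def by simp
  define P where "P = set (zip a b)"
  have cardP: "card P = card I" unfolding P_def
    using lab la by (simp add: distinct_card distinct_zipI1 da)
  have mem: "\<And>p. p \<in> P \<Longrightarrow> \<exists>k<length a. p = (a!k, b!k)"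
    unfolding P_def using lab by (auto simp: in_set_zip)
  have "saln w P"
    unfolding saln_def
  proof (intro conjI)
    show "finite P" unfolding P_def by simp
    show "\<forall>(i,j)\<in>P. i < length w \<and> j < length w \<and> i \<noteq> j \<and> w!i = w!j"
    proof (clarify)
      fix i j assume "(i,j) \<in> P"
      then obtain k where k: "k < length a" "i = a!k" "j = b!k" using mem by blast
      have "a!k \<in> set a" "b!k \<in> set b" using k lab by auto
      hence "i \<in> I" "j \<in> J" "i < length w" "j < length w" using k by (auto simp: a_def b_def)
      moreover have "w!i = w!j" using k lab mab by (metis nth_map)
      ultimately show "i < length w \<and> j < length w \<and> i \<noteq> j \<and> w!i = w!j" using assms(3) by auto
    qed
    show "schain P" unfolding schain_def
    proof (intro ballI impI)
      fix p q assume "p \<in> P" "q \<in> P" "p \<noteq> q"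
      then obtain k1 k2 where "k1 < length a" "p = (a!k1, b!k1)" "k2 < length a" "q = (a!k2, b!k2)"
        using mem by metis
      moreover have "k1 \<noteq> k2" using calculation \<open>p \<noteq> q\<close> by auto
      ultimately show "(fst p < fst q \<and> snd p < snd q) \<or> (fst q < fst p \<and> snd q < snd p)"
        using sa sb lab by (metis fst_conv snd_conv sorted_wrt_nth_less linorder_neqE_nat)
    qed
  qed
  with cardP show ?thesis by blast
qed

lemma LT_le:
  assumes "\<And>P. saln w P \<Longrightarrow> card P \<le> B"
  shows "LT w \<le> B"
proof -
  have sub: "twins_len w \<subseteq> {..length w}"
  proof
    fix x assume "x \<in> twins_len w"
    then obtain I J where "x = card I" "I \<subseteq> {..<length w}" unfolding twins_len_def by blast
    then show "x \<in> {..length w}" using card_mono[of "{..<length w}" I] by auto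
  qed
  have "0 \<in> twins_len w" unfolding twins_len_def
    by (rule CollectI, rule exI[of _ "{}"], rule exI[of _ "{}"]) simp
  moreover have "\<forall>x\<in>twins_len w. x \<le> B"
  proof
    fix x assume "x \<in> twins_len w"
    then obtain I J where "x = card I" "I \<subseteq> {..<length w}" "J \<subseteq> {..<length w}"
       "I \<inter> J = {}" "nths w I = nths w J" unfolding twins_len_def by blast
    then show "x \<le> B" using twins_saln assms by metis
  qed
  ultimately show ?thesis unfolding LT_def using sub
    by (metis Max_le_iff empty_iff finite_atMost finite_subset)
qed

lemma schain_subset: "schain P \<Longrightarrow> Q \<subseteq> P \<Longrightarrow> schain Q"
  unfolding schain_def by blast

lemma chain_common_subseq:
  assumes "finite Q" "schain Q" "\<forall>(a,b)\<in>Q. a < length xs \<and> b < length ys \<and> xs!a = ys!b"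
  shows "\<exists>z. subseq z xs \<and> subseq z ys \<and> length z = card Q"
  using assms
proof (induction "card Q" arbitrary: Q xs ys)
  case 0
  then show ?case by (intro exI[of _ "[]"]) auto
next
  case (Suc n)
  have "Q \<noteq> {}" using Suc.hyps(2) by auto
  define a0 where "a0 = Max (fst ` Q)"
  have "a0 \<in> fst ` Q" unfolding a0_def using Suc.prems \<open>Q \<noteq> {}\<close> by simp
  then obtain b0 where p0: "(a0, b0) \<in> Q" by force
  have below: "\<And>q. q \<in> Q \<Longrightarrow> q \<noteq> (a0,b0) \<Longrightarrow> fst q < a0 \<and> snd q < b0"
  proof -
    fix q assume "q \<in> Q" "q \<noteq> (a0,b0)"
    hence "fst q \<le> a0" unfolding a0_def using Suc.prems by simp
    moreover have "(fst q < fst (a0,b0) \<and> snd q < snd (a0,b0)) \<or> (fst (a0,b0) < fst q \<and> snd (a0,b0) < snd q)"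
      using Suc.prems(2) \<open>q \<in> Q\<close> \<open>q \<noteq> (a0,b0)\<close> p0 unfolding schain_def by blast
    ultimately show "fst q < a0 \<and> snd q < b0" by auto
  qed
  define Q' where "Q' = Q - {(a0,b0)}"
  have cQ': "n = card Q'" unfolding Q'_def using Suc.hyps(2) Suc.prems(1) p0 by simp
  have bQ': "\<forall>(a,b)\<in>Q'. a < length (take a0 xs) \<and> b < length (take b0 ys) \<and> take a0 xs!a = take b0 ys!b"
  proof (clarify)
    fix a b assume "(a,b) \<in> Q'"
    hence "a < a0" "b < b0" "(a,b) \<in> Q" using below unfolding Q'_def by auto
    with Suc.prems(3) show "a < length (take a0 xs) \<and> b < length (take b0 ys) \<and> take a0 xs!a = take b0 ys!b"
      by auto
  qed
  have fQ': "finite Q'" using Suc.prems(1) unfolding Q'_def by simp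
  have sQ': "schain Q'" using schain_subset[OF Suc.prems(2)] unfolding Q'_def by blast
  have "\<exists>z. subseq z (take a0 xs) \<and> subseq z (take b0 ys) \<and> length z = card Q'"
    by (rule Suc.hyps(1)[OF cQ' fQ' sQ' bQ'])
  then obtain z where z: "subseq z (take a0 xs)" "subseq z (take b0 ys)" "length z = n"
    using cQ' by auto
  have ab: "a0 < length xs" "b0 < length ys" "xs!a0 = ys!b0" using Suc.prems(3) p0 by auto
  have "subseq (z @ [xs!a0]) (take a0 xs @ [xs!a0])" using z(1) by (simp add: list_emb_append_mono)
  also have "take a0 xs @ [xs!a0] = take (Suc a0) xs" using ab by (simp add: take_Suc_conv_app_nth)
  also have "subseq (take (Suc a0) xs) xs" by (rule prefix_imp_subseq) (rule take_is_prefix)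
  finally have s1: "subseq (z @ [xs!a0]) xs" .
  have "subseq (z @ [ys!b0]) (take b0 ys @ [ys!b0])" using z(2) by (simp add: list_emb_append_mono)
  also have "take b0 ys @ [ys!b0] = take (Suc b0) ys" using ab by (simp add: take_Suc_conv_app_nth)
  also have "subseq (take (Suc b0) ys) ys" by (rule prefix_imp_subseq) (rule take_is_prefix)
  finally have s2: "subseq (z @ [xs!a0]) ys" using ab by simp
  show ?case using s1 s2 z(3) Suc.hyps(2) by (intro exI[of _ "z @ [xs!a0]"]) simp
qed

lemma LCS_ge:
  assumes "subseq z xs" "subseq z ys"
  shows "length z \<le> LCS xs ys"
proof -
  have "{length u | u. subseq u xs \<and> subseq u ys} \<subseteq> {..length xs}"
    by (auto dest: list_emb_length)
  hence "finite {length u | u. subseq u xs \<and> subseq u ys}" by (rule finite_subset) simp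
  thus ?thesis unfolding LCS_def using assms by (intro Max_ge) auto
qed


definition cchain :: "(nat \<times> nat) set \<Rightarrow> bool" where
  "cchain E \<longleftrightarrow> (\<forall>c\<in>E. \<forall>d\<in>E. (fst c \<le> fst d \<and> snd c \<le> snd d) \<or> (fst d \<le> fst c \<and> snd d \<le> snd c))"

lemma chain_cover:
  assumes "finite E" "cchain E"
  shows "\<exists>S R C. S \<subseteq> E \<and> schain S \<and> finite S \<and> finite R \<and> finite C \<and> card R + card C \<le> card S \<and>
           (\<forall>c\<in>E. fst c \<in> R \<or> snd c \<in> C)"
  using assms
proof (induction E rule: finite_psubset_induct)
  case (psubset E)
  show ?case
  proof (cases "E = {}")
    case True
    then show ?thesis by (intro exI[of _ "{}"]) (auto simp: schain_def)
  next
    case False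
    define m where "m = Max ((\<lambda>c. fst c + snd c) ` E)"
    have "m \<in> (\<lambda>c. fst c + snd c) ` E" unfolding m_def using psubset.hyps False by simp
    then obtain p where p: "p \<in> E" "fst p + snd p = m" by auto
    have top: "\<And>c. c \<in> E \<Longrightarrow> fst c \<le> fst p \<and> snd c \<le> snd p"
    proof -
      fix c assume c: "c \<in> E"
      have "fst c + snd c \<le> m" unfolding m_def using psubset.hyps c by simp
      have "(fst c \<le> fst p \<and> snd c \<le> snd p) \<or> (fst p \<le> fst c \<and> snd p \<le> snd c)"
        using psubset.prems p(1) c unfolding cchain_def by blast
      then show "fst c \<le> fst p \<and> snd c \<le> snd p" using \<open>fst c + snd c \<le> m\<close> p(2) by linarith
    qed
    define E' where "E' = {c\<in>E. fst c < fst p \<and> snd c < snd p}"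
    have "E' \<subset> E" unfolding E'_def using p by auto
    moreover have "cchain E'" using psubset.prems unfolding cchain_def E'_def by blast
    ultimately have "\<exists>S R C. S \<subseteq> E' \<and> schain S \<and> finite S \<and> finite R \<and> finite C \<and> card R + card C \<le> card S \<and>
           (\<forall>c\<in>E'. fst c \<in> R \<or> snd c \<in> C)" by (rule psubset.IH)
    then obtain S R C where IH: "S \<subseteq> E'" "schain S" "finite S" "finite R" "finite C"
      "card R + card C \<le> card S" "\<forall>c\<in>E'. fst c \<in> R \<or> snd c \<in> C"
      by blast
    have pS: "p \<notin> S" using IH(1) unfolding E'_def by auto
    have sS: "schain (insert p S)" using IH(1,2) unfolding schain_def E'_def by auto
    have cS: "card (insert p S) = Suc (card S)" using pS IH(3) by simp
    have sub: "insert p S \<subseteq> E" using IH(1) p unfolding E'_def by auto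
    show ?thesis
    proof (cases "\<exists>c\<in>E. c \<noteq> p \<and> fst c = fst p")
      case True
      then obtain c0 where c0: "c0 \<in> E" "c0 \<noteq> p" "fst c0 = fst p" by blast
      have "snd c0 < snd p" using top[OF c0(1)] c0(2,3) by (cases c0, cases p) auto
      have cov: "\<forall>c\<in>E. fst c \<in> insert (fst p) R \<or> snd c \<in> C"
      proof
        fix c assume c: "c \<in> E"
        show "fst c \<in> insert (fst p) R \<or> snd c \<in> C"
        proof (cases "c \<in> E'")
          case True then show ?thesis using IH(7) by auto
        next
          case False
          hence "fst c = fst p \<or> snd c = snd p" using top[OF c] c unfolding E'_def by auto
          moreover have "(fst c \<le> fst c0 \<and> snd c \<le> snd c0) \<or> (fst c0 \<le> fst c \<and> snd c0 \<le> snd c)"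
            using psubset.prems c c0(1) unfolding cchain_def by blast
          hence "\<not> (fst c < fst p \<and> snd c = snd p)"
            using \<open>snd c0 < snd p\<close> c0(3) by linarith
          ultimately have "fst c = fst p" using top[OF c] by auto
          then show ?thesis by auto
        qed
      qed
      have "card (insert (fst p) R) + card C \<le> card (insert p S)"
      proof -
        have "card (insert (fst p) R) \<le> Suc (card R)" using IH(4) by (simp add: card_insert_if)
        then show ?thesis using IH(6) cS by linarith
      qed
      moreover have "finite (insert p S)" "finite (insert (fst p) R)" using IH(3,4) by auto
      ultimately show ?thesis using sS sub cov IH(5)
        by (intro exI[of _ "insert p S"] exI[of _ "insert (fst p) R"] exI[of _ C] conjI) (assumption+)
    next
      case False
      have cov: "\<forall>c\<in>E. fst c \<in> R \<or> snd c \<in> insert (snd p) C"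
      proof
        fix c assume c: "c \<in> E"
        show "fst c \<in> R \<or> snd c \<in> insert (snd p) C"
        proof (cases "c \<in> E'")
          case True then show ?thesis using IH(7) by auto
        next
          case False': False
          hence "fst c = fst p \<or> snd c = snd p" using top[OF c] c unfolding E'_def by auto
          then show ?thesis using False c by auto
        qed
      qed
      have "card R + card (insert (snd p) C) \<le> card (insert p S)"
      proof -
        have "card (insert (snd p) C) \<le> Suc (card C)" using IH(5) by (simp add: card_insert_if)
        then show ?thesis using IH(6) cS by linarith
      qed
      moreover have "finite (insert p S)" "finite (insert (snd p) C)" using IH(3,5) by auto
      ultimately show ?thesis using sS sub cov IH(4)
        by (intro exI[of _ "insert p S"] exI[of _ R] exI[of _ "insert (snd p) C"] conjI) (assumption+)
    qed
  qed
qed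

lemma mod_lt_of_div_eq: "(a::nat) < b \<Longrightarrow> a div K = b div K \<Longrightarrow> a mod K < b mod K"
  by (metis add_less_cancel_left div_mult_mod_eq)

lemma eq_of_div_mod: "(a::nat) div K = b div K \<Longrightarrow> a mod K = b mod K \<Longrightarrow> a = b"
  by (metis div_mult_mod_eq)

lemma card_div_in:
  assumes "finite R" "K > 0"
  shows "finite {i::nat. i div K \<in> R} \<and> card {i::nat. i div K \<in> R} \<le> K * card R"
proof -
  have sub: "{i::nat. i div K \<in> R} \<subseteq> (\<Union>A\<in>R. {A*K..<A*K+K})"
  proof
    fix i :: nat assume "i \<in> {i. i div K \<in> R}"
    moreover have "i div K * K \<le> i" "i < i div K * K + K"
      using div_mult_mod_eq[of i K] mod_less_divisor[OF assms(2), of i] by linarith+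
    ultimately show "i \<in> (\<Union>A\<in>R. {A*K..<A*K+K})" by (intro UN_I[of "i div K"]) auto
  qed
  have fin: "finite (\<Union>A\<in>R. {A*K..<A*K+K})" using assms(1) by simp
  have "card {i::nat. i div K \<in> R} \<le> card (\<Union>A\<in>R. {A*K..<A*K+K})" by (rule card_mono[OF fin sub])
  also have "\<dots> \<le> (\<Sum>A\<in>R. card {A*K..<A*K+K})" by (rule card_UN_le[OF assms(1)])
  also have "\<dots> = K * card R" by simp
  finally show ?thesis using finite_subset[OF sub fin] by simp
qed

lemma card_fst_div:
  assumes "finite R" "K > 0" "inj_on h P"
  shows "card {p\<in>P. h p div K \<in> R} \<le> K * card R"
proof -
  have "card {p\<in>P. h p div K \<in> R} = card (h ` {p\<in>P. h p div K \<in> R})"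
    using assms(3) by (simp add: card_image inj_on_subset)
  also have "\<dots> \<le> card {i::nat. i div K \<in> R}"
    using card_div_in[OF assms(1,2)] by (intro card_mono) auto
  also have "\<dots> \<le> K * card R" using card_div_in[OF assms(1,2)] by simp
  finally show ?thesis .
qed

lemma concat_len_nth:
  assumes "\<forall>x\<in>set u. length (\<sigma> x) = K"
  shows "length (concat (map \<sigma> u)) = K * length u \<and>
         (\<forall>p < K * length u. concat (map \<sigma> u) ! p = \<sigma> (u ! (p div K)) ! (p mod K))"
  using assms
proof (induction u)
  case Nil then show ?case by simp
next
  case (Cons x u)
  have lx: "length (\<sigma> x) = K" using Cons.prems by simp
  have IH: "length (concat (map \<sigma> u)) = K * length u"
       "\<forall>p < K * length u. concat (map \<sigma> u) ! p = \<sigma> (u ! (p div K)) ! (p mod K)"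
    using Cons.IH Cons.prems by auto
  show ?case
  proof (intro conjI allI impI)
    show "length (concat (map \<sigma> (x # u))) = K * length (x # u)" using lx IH(1) by simp
    fix p assume p: "p < K * length (x # u)"
    show "concat (map \<sigma> (x # u)) ! p = \<sigma> ((x # u) ! (p div K)) ! (p mod K)"
    proof (cases "p < K")
      case True then show ?thesis using lx by (simp add: nth_append)
    next
      case False
      have K0: "K > 0" using p False by (cases K) auto
      have pK: "p - K < K * length u" using p False by simp
      have d: "p div K = Suc ((p - K) div K)" using False K0
        by (simp add: le_div_geq)
      have m: "p mod K = (p - K) mod K" using False by (simp add: le_mod_geq)
      show ?thesis using False lx IH(2) pK d m by (simp add: nth_append)
    qed
  qed
qed

lemma perms_props: "xs \<in> perms K \<Longrightarrow> length xs = K \<and> distinct xs \<and> set xs = {1..K}"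
  unfolding perms_def using distinct_card[of xs] by auto

lemma reduction:
  assumes K0: "K > 0"
    and perm: "\<forall>x\<in>set u. \<sigma> x \<in> perms K"
    and lcs: "\<forall>x\<in>set u. \<forall>y\<in>set u. x \<noteq> y \<longrightarrow> LCS (\<sigma> x) (\<sigma> y) \<le> L"
    and sal: "saln (concat (map \<sigma> u)) P"
  shows "\<exists>P'. saln u P' \<and> card P \<le> 2 * length u * L + K * card P'"
proof -
  define w where "w = concat (map \<sigma> u)"
  define q where "q = length u"
  have lens: "\<forall>x\<in>set u. length (\<sigma> x) = K" and dists: "\<forall>x\<in>set u. distinct (\<sigma> x)"
    using perm perms_props by blast+
  have lw: "length w = K * q" and nw: "\<forall>p < K * q. w ! p = \<sigma> (u ! (p div K)) ! (p mod K)"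
    using concat_len_nth[OF lens] unfolding w_def q_def by auto
  have Pfin: "finite P" and Psch: "schain P"
    and Pprop: "\<forall>(i,j)\<in>P. i < K*q \<and> j < K*q \<and> i \<noteq> j \<and> w!i = w!j"
    using sal lw unfolding saln_def w_def by auto
  have divlt: "\<And>i. i < K*q \<Longrightarrow> i div K < q"
    by (simp add: less_mult_imp_div_less mult.commute)
  have modlt: "\<And>i. i mod K < K" using K0 by simp
  define cell where "cell = (\<lambda>p::nat\<times>nat. (fst p div K, snd p div K))"
  define Cells where "Cells = cell ` P"
  have Cfin: "finite Cells" unfolding Cells_def using Pfin by simp
  have cell_bd: "\<forall>c\<in>Cells. fst c < q \<and> snd c < q \<and> fst c \<noteq> snd c"
  proof
    fix c assume "c \<in> Cells"
    then obtain i j where ij: "(i,j) \<in> P" "c = (i div K, j div K)" unfolding Cells_def cell_def by auto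
    have bd: "i < K*q" "j < K*q" "i \<noteq> j" "w!i = w!j" using Pprop ij(1) by auto
    have "i div K \<noteq> j div K"
    proof
      assume eqd: "i div K = j div K"
      define A where "A = i div K"
      have "A < q" using divlt bd(1) unfolding A_def by simp
      hence uA: "u ! A \<in> set u" unfolding q_def by simp
      have "\<sigma> (u!A) ! (i mod K) = \<sigma> (u!A) ! (j mod K)"
        using nw bd eqd unfolding A_def by metis
      moreover have "i mod K < length (\<sigma> (u!A))" "j mod K < length (\<sigma> (u!A))"
        using lens uA modlt by auto
      ultimately have "i mod K = j mod K" using dists uA nth_eq_iff_index_eq by blast
      with eqd have "i = j" by (rule eq_of_div_mod)
      with bd(3) show False by simp
    qed
    then show "fst c < q \<and> snd c < q \<and> fst c \<noteq> snd c" using ij(2) divlt bd by auto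
  qed
  have Cch: "cchain Cells" unfolding cchain_def
  proof (intro ballI)
    fix c d assume "c \<in> Cells" "d \<in> Cells"
    then obtain p p' where pp: "p \<in> P" "p' \<in> P" "c = cell p" "d = cell p'" unfolding Cells_def by auto
    show "(fst c \<le> fst d \<and> snd c \<le> snd d) \<or> (fst d \<le> fst c \<and> snd d \<le> snd c)"
    proof (cases "p = p'")
      case True then show ?thesis using pp by simp
    next
      case False
      hence "(fst p < fst p' \<and> snd p < snd p') \<or> (fst p' < fst p \<and> snd p' < snd p)"
        using Psch pp unfolding schain_def by blast
      then show ?thesis using pp unfolding cell_def by (auto intro: div_le_mono)
    qed
  qed
  have cardC: "card Cells \<le> 2 * q"
  proof -
    have "inj_on (\<lambda>c. fst c + snd c) Cells"
    proof (rule inj_onI)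
      fix c d assume cd: "c \<in> Cells" "d \<in> Cells" "fst c + snd c = fst d + snd d"
      have "(fst c \<le> fst d \<and> snd c \<le> snd d) \<or> (fst d \<le> fst c \<and> snd d \<le> snd c)"
        using Cch cd(1,2) unfolding cchain_def by blast
      then have "fst c = fst d \<and> snd c = snd d" using cd(3) by linarith
      then show "c = d" by (simp add: prod_eq_iff)
    qed
    moreover have "(\<lambda>c. fst c + snd c) ` Cells \<subseteq> {..<2*q}" using cell_bd by fastforce
    ultimately have "card Cells \<le> card {..<2*q}" by (intro card_inj_on_le) auto
    then show ?thesis by simp
  qed
  define Eq where "Eq = {c\<in>Cells. u ! fst c = u ! snd c}"
  define Ne where "Ne = Cells - Eq"
  have injfst: "inj_on fst P"
  proof (rule inj_onI)
    fix p p' assume "p \<in> P" "p' \<in> P" "fst p = fst p'"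
    then show "p = p'" using Psch unfolding schain_def by fastforce
  qed
  have injsnd: "inj_on snd P"
  proof (rule inj_onI)
    fix p p' assume "p \<in> P" "p' \<in> P" "snd p = snd p'"
    then show "p = p'" using Psch unfolding schain_def by fastforce
  qed
  have fib: "card {p\<in>P. cell p = c} \<le> L" if cNe: "c \<in> Ne" for c
  proof -
    obtain A B where c: "c = (A,B)" by fastforce
    have AB: "A < q" "B < q" "u!A \<noteq> u!B" using cNe cell_bd unfolding Ne_def Eq_def c by auto
    define F where "F = {p\<in>P. cell p = c}"
    define f where "f = (\<lambda>p::nat\<times>nat. (fst p mod K, snd p mod K))"
    have Fsub: "F \<subseteq> P" unfolding F_def by auto
    have Fdiv: "\<And>p. p \<in> F \<Longrightarrow> fst p div K = A \<and> snd p div K = B"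
      unfolding F_def cell_def c by auto
    have injf: "inj_on f F"
    proof (rule inj_onI)
      fix p p' assume pp: "p \<in> F" "p' \<in> F" "f p = f p'"
      have d1: "fst p div K = fst p' div K" using Fdiv[OF pp(1)] Fdiv[OF pp(2)] by simp
      have d2: "fst p mod K = fst p' mod K" using pp(3) unfolding f_def by simp
      have "fst p = fst p'" using d1 d2 by (rule eq_of_div_mod)
      moreover have "p \<in> P" "p' \<in> P" using Fsub pp(1,2) by auto
      ultimately show "p = p'" using inj_onD[OF injfst] by blast
    qed
    have schQ: "schain (f ` F)" unfolding schain_def
    proof (intro ballI impI)
      fix a b assume ab: "a \<in> f ` F" "b \<in> f ` F" "a \<noteq> b"
      then obtain p p' where pp: "p \<in> F" "p' \<in> F" "a = f p" "b = f p'" by auto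
      hence "p \<noteq> p'" using ab(3) by auto
      hence "(fst p < fst p' \<and> snd p < snd p') \<or> (fst p' < fst p \<and> snd p' < snd p)"
        using Psch pp Fsub unfolding schain_def by blast
      then show "(fst a < fst b \<and> snd a < snd b) \<or> (fst b < fst a \<and> snd b < snd a)"
        using Fdiv[OF pp(1)] Fdiv[OF pp(2)] pp(3,4) unfolding f_def
        by (auto intro: mod_lt_of_div_eq)
    qed
    have uA: "u!A \<in> set u" "u!B \<in> set u" using AB unfolding q_def by auto
    have bdQ: "\<forall>(a,b)\<in>f ` F. a < length (\<sigma> (u!A)) \<and> b < length (\<sigma> (u!B)) \<and> \<sigma> (u!A) ! a = \<sigma> (u!B) ! b"
    proof
      fix x assume "x \<in> f ` F"
      then obtain i j where ijF: "(i,j) \<in> F" and x: "x = (i mod K, j mod K)" unfolding f_def by force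
      have "(i,j) \<in> P" using ijF Fsub by auto
      hence bd: "i < K*q" "j < K*q" "w!i = w!j" using Pprop by auto
      have "\<sigma> (u!A) ! (i mod K) = \<sigma> (u!B) ! (j mod K)"
        using nw bd Fdiv[OF ijF] by auto
      then show "case x of (a,b) \<Rightarrow> a < length (\<sigma> (u!A)) \<and> b < length (\<sigma> (u!B)) \<and> \<sigma> (u!A) ! a = \<sigma> (u!B) ! b"
        using lens uA modlt x by auto
    qed
    have finQ: "finite (f ` F)" using Pfin Fsub finite_subset by blast
    obtain z where z: "subseq z (\<sigma> (u!A))" "subseq z (\<sigma> (u!B))" "length z = card (f ` F)"
      using chain_common_subseq[OF finQ schQ bdQ] by (elim exE conjE) simp
    have "card F = card (f ` F)" using injf by (simp add: card_image)
    also have "\<dots> \<le> LCS (\<sigma> (u!A)) (\<sigma> (u!B))" using LCS_ge[OF z(1,2)] z(3) by simp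
    also have "\<dots> \<le> L" using lcs uA AB(3) by blast
    finally show ?thesis unfolding F_def .
  qed
  have NeFin: "finite Ne" unfolding Ne_def using Cfin by simp
  have part1: "card {p\<in>P. cell p \<in> Ne} \<le> 2 * q * L"
  proof -
    have "{p\<in>P. cell p \<in> Ne} = (\<Union>c\<in>Ne. {p\<in>P. cell p = c})" by auto
    hence "card {p\<in>P. cell p \<in> Ne} \<le> (\<Sum>c\<in>Ne. card {p\<in>P. cell p = c})"
      using card_UN_le[OF NeFin] by simp
    also have "\<dots> \<le> (\<Sum>c\<in>Ne. L)" by (rule sum_mono) (rule fib)
    also have "\<dots> = card Ne * L" by simp
    also have "\<dots> \<le> card Cells * L" using Cfin unfolding Ne_def by (intro mult_le_mono1 card_mono) auto
    also have "\<dots> \<le> 2 * q * L" using cardC by simp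
    finally show ?thesis .
  qed
  have EqFin: "finite Eq" unfolding Eq_def using Cfin by simp
  have EqCh: "cchain Eq" using Cch unfolding cchain_def Eq_def by blast
  obtain S R C where SRC: "S \<subseteq> Eq" "schain S" "finite S" "finite R" "finite C"
    "card R + card C \<le> card S" "\<forall>c\<in>Eq. fst c \<in> R \<or> snd c \<in> C"
    using chain_cover[OF EqFin EqCh] by blast
  have part2: "card {p\<in>P. cell p \<in> Eq} \<le> K * card S"
  proof -
    have sub: "{p\<in>P. cell p \<in> Eq} \<subseteq> {p\<in>P. fst p div K \<in> R} \<union> {p\<in>P. snd p div K \<in> C}"
    proof
      fix p assume "p \<in> {p\<in>P. cell p \<in> Eq}"
      hence "p \<in> P" "fst (cell p) \<in> R \<or> snd (cell p) \<in> C" using SRC(7) by auto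
      thus "p \<in> {p\<in>P. fst p div K \<in> R} \<union> {p\<in>P. snd p div K \<in> C}" unfolding cell_def by auto
    qed
    have finU: "finite ({p\<in>P. fst p div K \<in> R} \<union> {p\<in>P. snd p div K \<in> C})" using Pfin by simp
    have "card {p\<in>P. cell p \<in> Eq} \<le> card ({p\<in>P. fst p div K \<in> R} \<union> {p\<in>P. snd p div K \<in> C})"
      by (rule card_mono[OF finU sub])
    also have "\<dots> \<le> card {p\<in>P. fst p div K \<in> R} + card {p\<in>P. snd p div K \<in> C}"
      by (rule card_Un_le[of "{p\<in>P. fst p div K \<in> R}" "{p\<in>P. snd p div K \<in> C}"])
    also have "\<dots> \<le> K * card R + K * card C"
      using card_fst_div[OF SRC(4) K0 injfst] card_fst_div[OF SRC(5) K0 injsnd] by linarith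
    also have "\<dots> \<le> K * card S" using SRC(6)
      by (metis add_mult_distrib2 mult_le_mono2)
    finally show ?thesis .
  qed
  have salS: "saln u S" unfolding saln_def
  proof (intro conjI)
    show "finite S" by (rule SRC(3))
    show "schain S" by (rule SRC(2))
    show "\<forall>(i,j)\<in>S. i < length u \<and> j < length u \<and> i \<noteq> j \<and> u!i = u!j"
      using SRC(1) cell_bd unfolding Eq_def q_def by fastforce
  qed
  have "P = {p\<in>P. cell p \<in> Ne} \<union> {p\<in>P. cell p \<in> Eq}" unfolding Ne_def Cells_def by auto
  hence "card P \<le> card {p\<in>P. cell p \<in> Ne} + card {p\<in>P. cell p \<in> Eq}"
    using card_Un_le[of "{p\<in>P. cell p \<in> Ne}" "{p\<in>P. cell p \<in> Eq}"] by simp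
  also have "\<dots> \<le> 2 * q * L + K * card S" using part1 part2 by linarith
  finally show ?thesis using salS unfolding q_def by blast
qed

lemma fact_ge_2k: "k \<ge> 3 \<Longrightarrow> 2 * k \<le> fact k"
proof (induction k rule: dec_induct)
  case base then show ?case by (simp add: fact_numeral)
next
  case (step n)
  have "2 * Suc n \<le> 2 * n * Suc n" using step.hyps by simp
  also have "\<dots> \<le> fact n * Suc n" using step.IH by (intro mult_le_mono1) simp
  also have "\<dots> = fact (Suc n)" by (simp add: algebra_simps)
  finally show ?case .
qed

lemma perms_eq: "perms K = permutations_of_set {1..K}"
  unfolding perms_def permutations_of_set_def by auto

lemma card_perms: "card (perms K) = fact K" "finite (perms K)"
  unfolding perms_eq by (simp_all add: finite_permutations_of_set)

lemma family:
  assumes "K \<ge> 3"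
  shows "\<exists>S. S \<subseteq> perms K \<and> card S = 2*K \<and> finite S \<and>
             (\<forall>p\<in>S. \<forall>q\<in>S. p \<noteq> q \<longrightarrow> LCS p q \<le> LCS2_perms (2*K) K)"
proof -
  define vals where "vals = (\<lambda>S. {LCS p q | p q. p \<in> S \<and> q \<in> S \<and> p \<noteq> q})"
  define SS where "SS = {S. S \<subseteq> perms K \<and> card S = 2*K}"
  have finvals: "finite (vals S)" if "finite S" for S
  proof -
    have "vals S \<subseteq> (\<lambda>(p,q). LCS p q) ` (S \<times> S)" unfolding vals_def by auto
    moreover have "finite ((\<lambda>(p,q). LCS p q) ` (S \<times> S))" using that by simp
    ultimately show ?thesis by (rule finite_subset)
  qed
  have "2*K \<le> card (perms K)" using fact_ge_2k[OF assms] card_perms by simp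
  then obtain T where T: "T \<subseteq> perms K" "card T = 2*K" by (meson obtain_subset_with_card_n)
  hence neSS: "SS \<noteq> {}" unfolding SS_def by auto
  have finSS: "finite SS" unfolding SS_def using card_perms(2) by simp
  have eq: "LCS2_perms (2*K) K = Min ((\<lambda>S. Max (vals S)) ` SS)"
    unfolding LCS2_perms_def vals_def SS_def by (rule arg_cong[where f=Min]) auto
  have "Min ((\<lambda>S. Max (vals S)) ` SS) \<in> (\<lambda>S. Max (vals S)) ` SS"
    using neSS finSS by (intro Min_in) auto
  then obtain S where S: "S \<in> SS" "LCS2_perms (2*K) K = Max (vals S)" using eq by auto
  have finS: "finite S" using S(1) card_perms(2) unfolding SS_def by (auto intro: finite_subset)
  have "\<forall>p\<in>S. \<forall>q\<in>S. p \<noteq> q \<longrightarrow> LCS p q \<le> LCS2_perms (2*K) K"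
  proof (intro ballI impI)
    fix p q assume "p \<in> S" "q \<in> S" "p \<noteq> q"
    hence "LCS p q \<in> vals S" unfolding vals_def by blast
    thus "LCS p q \<le> LCS2_perms (2*K) K" using S(2) finvals[OF finS] by simp
  qed
  thus ?thesis using S(1) finS unfolding SS_def by blast
qed

definition good :: "(nat \<Rightarrow> nat list) \<Rightarrow> nat \<Rightarrow> bool" where
  "good \<sigma> K \<longleftrightarrow> (\<forall>x\<in>{1..2*K}. \<sigma> x \<in> perms K) \<and>
     (\<forall>x\<in>{1..2*K}. \<forall>y\<in>{1..2*K}. x \<noteq> y \<longrightarrow> LCS (\<sigma> x) (\<sigma> y) \<le> LCS2_perms (2*K) K)"

lemma good_exists: "K \<ge> 3 \<Longrightarrow> \<exists>\<sigma>. good \<sigma> K"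
proof -
  assume K: "K \<ge> 3"
  obtain S where S: "S \<subseteq> perms K" "card S = 2*K" "finite S"
     "\<forall>p\<in>S. \<forall>q\<in>S. p \<noteq> q \<longrightarrow> LCS p q \<le> LCS2_perms (2*K) K" using family[OF K] by blast
  obtain h where h: "bij_betw h {1..card S} S" using ex_bij_betw_nat_finite_1[OF S(3)] by blast
  have "good h K" unfolding good_def
  proof (intro conjI ballI impI)
    fix x assume "x \<in> {1..2*K}"
    hence "x \<in> {1..card S}" using S(2) by simp
    hence "h x \<in> S" using bij_betwE[OF h] by blast
    then show "h x \<in> perms K" using S(1) by blast
  next
    fix x y assume xy: "x \<in> {1..2*K}" "y \<in> {1..2*K}" "x \<noteq> y"
    hence xy': "x \<in> {1..card S}" "y \<in> {1..card S}" using S(2) by simp_all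
    have hx: "h x \<in> S" "h y \<in> S" using bij_betwE[OF h] xy' by blast+
    have "h x \<noteq> h y"
    proof
      assume "h x = h y"
      with inj_onD[OF bij_betw_imp_inj_on[OF h]] xy' have "x = y" by blast
      with xy(3) show False by simp
    qed
    then show "LCS (h x) (h y) \<le> LCS2_perms (2*K) K" using S(4) hx by blast
  qed
  thus ?thesis by blast
qed

lemma LCS2_ge1: assumes "K \<ge> 3" shows "LCS2_perms (2*K) K \<ge> 1"
proof -
  obtain \<sigma> where g: "good \<sigma> K" using good_exists[OF assms] by blast
  have "1 \<in> {1..2*K}" "2 \<in> {1..2*K}" using assms by auto
  hence p: "\<sigma> 1 \<in> perms K" "\<sigma> 2 \<in> perms K" "LCS (\<sigma> 1) (\<sigma> 2) \<le> LCS2_perms (2*K) K"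
    using g unfolding good_def by auto
  have "1 \<in> set (\<sigma> 1)" "1 \<in> set (\<sigma> 2)" using p assms unfolding perms_def by auto
  hence "subseq [1] (\<sigma> 1)" "subseq [1] (\<sigma> 2)" by (simp_all add: subseq_singleton_left)
  hence "length [1::nat] \<le> LCS (\<sigma> 1) (\<sigma> 2)" by (rule LCS_ge)
  thus ?thesis using p(3) by simp
qed

lemma ceil_lt: "2 \<le> K \<Longrightarrow> K < m \<Longrightarrow> (m + K - 1) div K < (m::nat)"
proof -
  assume a: "2 \<le> K" "K < m"
  have "m * 2 \<le> m * K" using a by simp
  hence "m + K - 1 < m * K" using a by linarith
  thus ?thesis using a by (simp add: div_less_iff_less_mult)
qed

lemma ceil_bounds:
  assumes "K > (0::nat)"
  shows "m \<le> K * ((m + K - 1) div K)" "K * ((m + K - 1) div K) < m + K"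
proof -
  have e: "K * ((m + K - 1) div K) + (m + K - 1) mod K = m + K - 1"
    by (metis div_mult_mod_eq mult.commute)
  have "(m + K - 1) mod K < K" using assms by simp
  thus "m \<le> K * ((m + K - 1) div K)" using e assms by linarith
  show "K * ((m + K - 1) div K) < m + K" using e assms by linarith
qed

lemma ceil_lt': "\<not> m \<le> K \<Longrightarrow> \<not> K < 2 \<Longrightarrow> (m + K - Suc 0) div K < (m::nat)"
  using ceil_lt[of K m] by simp

function wd :: "(nat \<Rightarrow> nat \<Rightarrow> nat list) \<Rightarrow> nat \<Rightarrow> nat \<Rightarrow> nat list" where
  "wd \<Sigma> K m = (if m \<le> K \<or> K < 2 then [1..<m+1]
      else take m (concat (map (\<Sigma> K) (wd \<Sigma> (2*K) ((m + K - 1) div K)))))"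
  by pat_completeness auto
termination
  by (relation "measure (\<lambda>(\<Sigma>,K,m). m)") (auto intro: ceil_lt')

declare wd.simps[simp del]

lemma wd_props:
  shows "\<forall>K'\<ge>3. good (\<Sigma> K') K' \<Longrightarrow> K \<ge> 3 \<Longrightarrow> length (wd \<Sigma> K m) = m \<and> set (wd \<Sigma> K m) \<subseteq> {1..K}"
proof (induction \<Sigma> K m rule: wd.induct)
  case (1 \<Sigma> K m)
  show ?case
  proof (cases "m \<le> K \<or> K < 2")
    case True
    then show ?thesis using "1.prems" by (auto simp: wd.simps)
  next
    case False
    define q where "q = (m + K - 1) div K"
    define u where "u = wd \<Sigma> (2*K) q"
    have IH: "length u = q" "set u \<subseteq> {1..2*K}"
      using "1.IH"[OF False "1.prems"(1)] "1.prems"(2) unfolding u_def q_def by auto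
    have gK: "good (\<Sigma> K) K" using "1.prems" by blast
    have pK: "\<forall>x\<in>set u. \<Sigma> K x \<in> perms K" using gK IH(2) unfolding good_def by blast
    hence lens: "\<forall>x\<in>set u. length (\<Sigma> K x) = K" using perms_props by blast
    have lc: "length (concat (map (\<Sigma> K) u)) = K * q"
      using concat_len_nth[OF lens] IH(1) by simp
    have "m \<le> K * q" unfolding q_def using ceil_bounds(1)[of K m] "1.prems"(2) by simp
    hence l: "length (take m (concat (map (\<Sigma> K) u))) = m" using lc by simp
    have "set (take m (concat (map (\<Sigma> K) u))) \<subseteq> set (concat (map (\<Sigma> K) u))" by (rule set_take_subset)
    also have "\<dots> \<subseteq> {1..K}" using pK unfolding perms_def by auto
    finally have s: "set (take m (concat (map (\<Sigma> K) u))) \<subseteq> {1..K}" .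
    have "wd \<Sigma> K m = take m (concat (map (\<Sigma> K) u))"
      using False unfolding u_def q_def by (simp add: wd.simps[of \<Sigma> K m])
    then show ?thesis using l s by simp
  qed
qed

lemma saln_take: "saln (take m v) P \<Longrightarrow> saln v P"
  unfolding saln_def by auto

lemma wd_base:
  assumes "m \<le> K" "saln (wd \<Sigma> K m) P"
  shows "P = {}"
proof -
  have d: "distinct (wd \<Sigma> K m)" using assms(1) by (simp add: wd.simps[of \<Sigma> K m])
  have pr: "\<forall>(i,j)\<in>P. i < length (wd \<Sigma> K m) \<and> j < length (wd \<Sigma> K m) \<and> i \<noteq> j \<and> wd \<Sigma> K m!i = wd \<Sigma> K m!j"
    using assms(2) unfolding saln_def by simp
  show ?thesis
  proof (rule ccontr)
    assume "P \<noteq> {}"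
    then obtain i j where "(i,j) \<in> P" by auto
    hence "i < length (wd \<Sigma> K m)" "j < length (wd \<Sigma> K m)" "i \<noteq> j" "wd \<Sigma> K m!i = wd \<Sigma> K m!j"
      using pr by auto
    then show False using d nth_eq_iff_index_eq by blast
  qed
qed

lemma wd_step:
  assumes G: "\<forall>K'\<ge>3. good (\<Sigma> K') K'" and K: "K \<ge> 3" and m: "K < m"
    and sal: "saln (wd \<Sigma> K m) P"
  shows "\<exists>P'. saln (wd \<Sigma> (2*K) ((m + K - 1) div K)) P' \<and>
     card P \<le> 2 * ((m + K - 1) div K) * LCS2_perms (2*K) K + K * card P'"
proof -
  define q where "q = (m + K - 1) div K"
  define u where "u = wd \<Sigma> (2*K) q"
  have IH: "length u = q" "set u \<subseteq> {1..2*K}"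
    using wd_props[OF G, of "2*K" q] K unfolding u_def by auto
  have gK: "good (\<Sigma> K) K" using G K by blast
  have pK: "\<forall>x\<in>set u. \<Sigma> K x \<in> perms K" using gK IH(2) unfolding good_def by blast
  have lK: "\<forall>x\<in>set u. \<forall>y\<in>set u. x \<noteq> y \<longrightarrow> LCS (\<Sigma> K x) (\<Sigma> K y) \<le> LCS2_perms (2*K) K"
    using gK IH(2) unfolding good_def by blast
  have "wd \<Sigma> K m = take m (concat (map (\<Sigma> K) u))"
    using m K unfolding u_def q_def by (simp add: wd.simps[of \<Sigma> K m])
  hence "saln (concat (map (\<Sigma> K) u)) P" using sal saln_take by metis
  from reduction[OF _ pK lK this] K obtain P' where
    "saln u P'" "card P \<le> 2 * length u * LCS2_perms (2*K) K + K * card P'" by auto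
  then show ?thesis using IH(1) unfolding u_def q_def by auto
qed

lemma cube_bd: "(x::real) ^ 3 = 1/4 \<Longrightarrow> x \<le> 0.63"
proof (rule ccontr)
  assume a: "x ^ 3 = 1/4" "\<not> x \<le> 0.63"
  hence "(0.63::real) ^ 3 \<le> x ^ 3" by (intro power_mono) auto
  also have "\<dots> = 1/4" by (rule a(1))
  finally show False by (simp add: power_divide)
qed

lemma r_bounds: "0 \<le> (2::real) powr (-2/3)" "(2::real) powr (-2/3) \<le> 0.63" "(2::real) powr (-2/3) \<ge> 1/2"
proof -
  show "0 \<le> (2::real) powr (-2/3)" by simp
  have "((2::real) powr (-2/3)) ^ 3 = 2 powr (-2)"
    by (simp add: powr_realpow[symmetric] powr_powr)
  also have "\<dots> = 1/4" by (simp add: powr_minus powr_numeral)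
  finally have c: "((2::real) powr (-2/3)) ^ 3 = 1/4" .
  show "(2::real) powr (-2/3) \<le> 0.63" using cube_bd[OF c] by simp
  have "(2::real) powr (-1) \<le> 2 powr (-2/3)" by (intro powr_mono) auto
  thus "(2::real) powr (-2/3) \<ge> 1/2" by (simp add: powr_minus)
qed

lemma powr_facts:
  assumes "K \<ge> (1::nat)"
  shows "real K * real K powr (-2/3) = real K powr (1/3)"
        "real (2*K) powr (-2/3) = 2 powr (-2/3) * real K powr (-2/3)"
proof -
  have "real K powr (1/3) = real K powr (1 + (-2/3))" by simp
  also have "\<dots> = real K powr 1 * real K powr (-2/3)" by (rule powr_add)
  also have "\<dots> = real K * real K powr (-2/3)" using assms by simp
  finally show "real K * real K powr (-2/3) = real K powr (1/3)" by simp
  show "real (2*K) powr (-2/3) = 2 powr (-2/3) * real K powr (-2/3)"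
    by (simp add: powr_mult)
qed

lemma numA1: "(0::real) \<le> c \<Longrightarrow> Q < m + K \<Longrightarrow> K < m \<Longrightarrow> 0 \<le> K \<Longrightarrow> 2 * c * Q \<le> 6 * c * m"
proof -
  assume a: "0 \<le> c" "Q < m + K" "K < m" "0 \<le> K"
  hence "2 * Q \<le> 6 * m" by linarith
  thus ?thesis using a(1) mult_left_mono[of "2*Q" "6*m" c] by (simp add: algebra_simps)
qed

lemma numA2: "(0::real) \<le> c \<Longrightarrow> 0 \<le> r \<Longrightarrow> r \<le> 0.63 \<Longrightarrow> 0 \<le> Q \<Longrightarrow> Q < m + K \<Longrightarrow> 40*K < m \<Longrightarrow> 0 \<le> K
   \<Longrightarrow> c * Q * (2 + 6*r) \<le> 6*c*m"
proof -
  assume a: "0 \<le> c" "0 \<le> r" "r \<le> 0.63" "0 \<le> Q" "Q < m + K" "40*K < m" "0 \<le> K"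
  have "Q * (2 + 6*r) \<le> Q * 5.78" using a by (intro mult_left_mono) auto
  also have "\<dots> \<le> (m + K) * 5.78" using a by simp
  also have "\<dots> \<le> 6 * m" using a by simp
  finally have "Q * (2 + 6*r) \<le> 6*m" .
  thus ?thesis using a(1) mult_left_mono[of "Q * (2 + 6*r)" "6*m" c] by (simp add: algebra_simps)
qed

lemma numB: "(0::real) \<le> c \<Longrightarrow> 0 \<le> r \<Longrightarrow> r \<le> 0.63 \<Longrightarrow> 0 \<le> Q \<Longrightarrow> Q < m + K
   \<Longrightarrow> c * Q * (2 + 6*r) \<le> 6*c*m + 6*c*K"
proof -
  assume a: "0 \<le> c" "0 \<le> r" "r \<le> 0.63" "0 \<le> Q" "Q < m + K"
  have "Q * (2 + 6*r) \<le> Q * 6" using a by (intro mult_left_mono) auto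
  also have "\<dots> \<le> 6 * m + 6 * K" using a by simp
  finally have "Q * (2 + 6*r) \<le> 6*m + 6*K" .
  thus ?thesis using a(1) mult_left_mono[of "Q * (2 + 6*r)" "6*m+6*K" c] by (simp add: algebra_simps)
qed

lemma claimA:
  fixes C :: real
  assumes G: "\<forall>K'\<ge>3. good (\<Sigma> K') K'"
    and hypL: "\<forall>K\<ge>3. real (LCS2_perms (2*K) K) \<le> C * real K powr (1/3)"
    and C0: "0 \<le> C"
  shows "\<forall>K\<ge>20. \<forall>P. saln (wd \<Sigma> K m) P \<longrightarrow>
           real (card P) \<le> (if m \<le> K then 0 else 6 * C * real K powr (-2/3) * real m)"
proof (induction m rule: less_induct)
  case (less m)
  show ?case
  proof (intro allI impI)
    fix K P assume K: "K \<ge> 20" and sal: "saln (wd \<Sigma> K m) P"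
    show "real (card P) \<le> (if m \<le> K then 0 else 6 * C * real K powr (-2/3) * real m)"
    proof (cases "m \<le> K")
      case True
      then show ?thesis using wd_base[OF True sal] by simp
    next
      case False
      define q where "q = (m + K - 1) div K"
      define L where "L = LCS2_perms (2*K) K"
      define t where "t = real K powr (-2/3)"
      define r where "r = (2::real) powr (-2/3)"
      have K3: "K \<ge> 3" using K by simp
      obtain P' where P': "saln (wd \<Sigma> (2*K) q) P'" "card P \<le> 2 * q * L + K * card P'"
        using wd_step[OF G K3 _ sal] False unfolding q_def L_def by auto
      have qm: "q < m" unfolding q_def using K False by (intro ceil_lt) auto
      have IH: "real (card P') \<le> (if q \<le> 2*K then 0 else 6 * C * real (2*K) powr (-2/3) * real q)"
        using less.IH[OF qm] P'(1) K by auto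
      have t0: "0 \<le> t" unfolding t_def by simp
      have s: "real K * t = real K powr (1/3)" unfolding t_def using powr_facts(1)[of K] K by simp
      have L: "real L \<le> C * (real K * t)" using hypL K3 s unfolding L_def by simp
      have a2: "real (2*K) powr (-2/3) = r * t" unfolding r_def t_def using powr_facts(2)[of K] K by simp
      have qK: "real K * real q < real m + real K" "real m \<le> real K * real q"
        using ceil_bounds[of K m] K unfolding q_def by (simp_all add: of_nat_mult[symmetric] del: of_nat_mult)
      have Ct: "0 \<le> C * t" using C0 t0 by simp
      have cP0: "real (card P) \<le> real (2 * q * L + K * card P')" using P'(2) by (simp only: of_nat_le_iff)
      have cP: "real (card P) \<le> 2 * real q * real L + real K * real (card P')"
        using cP0 by simp
      show ?thesis
      proof (cases "q \<le> 2*K")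
        case True
        hence "card P' = 0" using IH by simp
        hence "real (card P) \<le> 2 * real q * real L" using cP by simp
        also have "\<dots> \<le> 2 * real q * (C * (real K * t))" using L by (intro mult_left_mono) auto
        also have "\<dots> = 2 * (C * t) * (real K * real q)" by (simp add: algebra_simps)
        also have "\<dots> \<le> 6 * (C * t) * real m"
          by (rule numA1[OF Ct qK(1)]) (use False in auto)
        finally show ?thesis using False unfolding t_def by (simp add: algebra_simps)
      next
        case True': False
        have IH': "real (card P') \<le> 6 * C * (r * t) * real q" using IH True' a2 by simp
        have "real (card P) \<le> 2 * real q * (C * (real K * t)) + real K * (6 * C * (r * t) * real q)"
          using cP L IH' by (intro order.trans[OF cP] add_mono mult_left_mono) auto
        also have "\<dots> = (C * t) * (real K * real q) * (2 + 6 * r)" by (simp add: algebra_simps)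
        also have "\<dots> \<le> 6 * (C * t) * real m"
        proof (rule numA2[OF Ct])
          show "0 \<le> r" "r \<le> 0.63" unfolding r_def using r_bounds by auto
          show "0 \<le> real K * real q" by simp
          show "real K * real q < real m + real K" by (rule qK(1))
          show "0 \<le> real K" by simp
          have "2*K + 1 \<le> q" using True' by simp
          hence "real K * (2 * real K + 1) \<le> real K * real q"
            by (intro mult_left_mono) (simp_all add: of_nat_mult[symmetric] del: of_nat_mult)
          moreover have "real K * (2 * real K + 1) \<ge> real K * 41"
            using K by (intro mult_left_mono) auto
          ultimately show "40 * real K < real m" using qK(1) by linarith
        qed
        finally show ?thesis using False unfolding t_def by (simp add: algebra_simps)
      qed
    qed
  qed
qed

lemma B_top:
  fixes C :: real
  assumes G: "\<forall>K'\<ge>3. good (\<Sigma> K') K'"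
    and hypL: "\<forall>K\<ge>3. real (LCS2_perms (2*K) K) \<le> C * real K powr (1/3)"
    and C0: "0 \<le> C" and K: "K \<ge> 20"
  shows "\<exists>E\<ge>0. \<forall>m P. saln (wd \<Sigma> K m) P \<longrightarrow> real (card P) \<le> 6 * C * real K powr (-2/3) * real m + E"
proof (intro exI[of _ 0] conjI allI impI)
  fix m P assume sal: "saln (wd \<Sigma> K m) P"
  have "real (card P) \<le> (if m \<le> K then 0 else 6 * C * real K powr (-2/3) * real m)"
    using claimA[OF G hypL C0, of m] K sal by blast
  moreover have "0 \<le> 6 * C * real K powr (-2/3) * real m" using C0 by simp
  ultimately show "real (card P) \<le> 6 * C * real K powr (-2/3) * real m + 0" by (auto split: if_splits)
qed simp

lemma B_step:
  fixes C :: real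
  assumes G: "\<forall>K'\<ge>3. good (\<Sigma> K') K'"
    and hypL: "\<forall>K\<ge>3. real (LCS2_perms (2*K) K) \<le> C * real K powr (1/3)"
    and C0: "0 \<le> C" and K3: "K \<ge> 3"
    and E': "E' \<ge> 0" "\<forall>m P. saln (wd \<Sigma> (2*K) m) P \<longrightarrow> real (card P) \<le> 6 * C * real (2*K) powr (-2/3) * real m + E'"
  shows "\<exists>E\<ge>0. \<forall>m P. saln (wd \<Sigma> K m) P \<longrightarrow> real (card P) \<le> 6 * C * real K powr (-2/3) * real m + E"
proof -
  define t where "t = real K powr (-2/3)"
  define r where "r = (2::real) powr (-2/3)"
  define E where "E = 6 * C * (real K * t) + real K * E'"
  have t0: "0 \<le> t" unfolding t_def by simp
  have Ct: "0 \<le> C * t" using C0 t0 by simp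
  have E0: "0 \<le> E" unfolding E_def using C0 t0 E' by simp
  have s: "real K * t = real K powr (1/3)" unfolding t_def using powr_facts(1)[of K] K3 by simp
  have a2: "real (2*K) powr (-2/3) = r * t" unfolding r_def t_def using powr_facts(2)[of K] K3 by simp
  have "\<forall>m P. saln (wd \<Sigma> K m) P \<longrightarrow> real (card P) \<le> 6 * C * t * real m + E"
  proof (intro allI impI)
    fix m P assume sal: "saln (wd \<Sigma> K m) P"
    show "real (card P) \<le> 6 * C * t * real m + E"
    proof (cases "m \<le> K")
      case True
      then show ?thesis using wd_base[OF True sal] E0 Ct by simp
    next
      case False
      define q where "q = (m + K - 1) div K"
      define L where "L = LCS2_perms (2*K) K"
      obtain P' where P': "saln (wd \<Sigma> (2*K) q) P'" "card P \<le> 2 * q * L + K * card P'"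
        using wd_step[OF G K3 _ sal] False unfolding q_def L_def by auto
      have IH': "real (card P') \<le> 6 * C * (r * t) * real q + E'" using E'(2) P'(1) a2 by auto
      have L: "real L \<le> C * (real K * t)" using hypL K3 s unfolding L_def by simp
      have qK: "real K * real q < real m + real K"
        using ceil_bounds[of K m] K3 unfolding q_def by (simp_all add: of_nat_mult[symmetric] del: of_nat_mult)
      have cP0: "real (card P) \<le> real (2 * q * L + K * card P')" using P'(2) by (simp only: of_nat_le_iff)
      have cP: "real (card P) \<le> 2 * real q * real L + real K * real (card P')"
        using cP0 by simp
      have "real (card P) \<le> 2 * real q * (C * (real K * t)) + real K * (6 * C * (r * t) * real q + E')"
        using L IH' by (intro order.trans[OF cP] add_mono mult_left_mono) auto
      also have "\<dots> = (C * t) * (real K * real q) * (2 + 6 * r) + real K * E'" by (simp add: algebra_simps)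
      also have "\<dots> \<le> (6 * (C * t) * real m + 6 * (C * t) * real K) + real K * E'"
      proof (rule add_mono[OF numB[OF Ct]])
        show "0 \<le> r" "r \<le> 0.63" unfolding r_def using r_bounds by auto
        show "0 \<le> real K * real q" by simp
        show "real K * real q < real m + real K" by (rule qK)
      qed simp
      also have "\<dots> = 6 * C * t * real m + E" unfolding E_def by (simp add: algebra_simps)
      finally show ?thesis .
    qed
  qed
  thus ?thesis using E0 unfolding t_def by blast
qed

lemma claimB:
  fixes C :: real
  assumes G: "\<forall>K'\<ge>3. good (\<Sigma> K') K'"
    and hypL: "\<forall>K\<ge>3. real (LCS2_perms (2*K) K) \<le> C * real K powr (1/3)"
    and C0: "0 \<le> C"
  shows "K \<ge> 3 \<Longrightarrow> \<exists>E\<ge>0. \<forall>m P. saln (wd \<Sigma> K m) P \<longrightarrow> real (card P) \<le> 6 * C * real K powr (-2/3) * real m + E"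
proof (induction "20 - K" arbitrary: K rule: less_induct)
  case less
  show ?case
  proof (cases "K \<ge> 20")
    case True
    then show ?thesis by (rule B_top[OF G hypL C0])
  next
    case False
    have "20 - 2*K < 20 - K" "2*K \<ge> 3" using False less.prems by auto
    then obtain E' where "E' \<ge> 0" "\<forall>m P. saln (wd \<Sigma> (2*K) m) P \<longrightarrow> real (card P) \<le> 6 * C * real (2*K) powr (-2/3) * real m + E'"
      using less.hyps by blast
    then show ?thesis using B_step[OF G hypL C0 less.prems] by blast
  qed
qed

lemma twins_fin_ne: "finite (twins_len w) \<and> twins_len w \<noteq> {}"
proof -
  have sub: "twins_len w \<subseteq> {..length w}"
  proof
    fix x assume "x \<in> twins_len w"
    then obtain I J where "x = card I" "I \<subseteq> {..<length w}" unfolding twins_len_def by blast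
    then show "x \<in> {..length w}" using card_mono[of "{..<length w}" I] by auto
  qed
  have "0 \<in> twins_len w" unfolding twins_len_def
    by (rule CollectI, rule exI[of _ "{}"], rule exI[of _ "{}"]) simp
  thus ?thesis using sub finite_subset by blast
qed

lemma LT_in: "LT w \<in> twins_len w"
  unfolding LT_def using twins_fin_ne by (intro Max_in) auto

lemma LT_witness: "\<exists>P. saln w P \<and> card P = LT w"
proof -
  obtain I J where "LT w = card I" "I \<subseteq> {..<length w}" "J \<subseteq> {..<length w}"
       "I \<inter> J = {}" "nths w I = nths w J" using LT_in[of w] unfolding twins_len_def by blast
  then show ?thesis using twins_saln by metis
qed

lemma LT_half: "2 * LT w \<le> length w"
proof -
  obtain I J where IJ: "LT w = card I" "I \<subseteq> {..<length w}" "J \<subseteq> {..<length w}"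
       "I \<inter> J = {}" "nths w I = nths w J" using LT_in[of w] unfolding twins_len_def by blast
  have "length (nths w I) = card I" using length_nths[of w I] IJ(2)
    by (metis (no_types, lifting) Collect_cong Collect_mem_eq lessThan_iff subsetD)
  moreover have "length (nths w J) = card J" using length_nths[of w J] IJ(3)
    by (metis (no_types, lifting) Collect_cong Collect_mem_eq lessThan_iff subsetD)
  ultimately have "card I = card J" using IJ(5) by simp
  moreover have "card (I \<union> J) = card I + card J"
    using IJ(2,3,4) by (intro card_Un_disjoint) (auto intro: finite_subset)
  moreover have "card (I \<union> J) \<le> length w" using IJ(2,3) card_mono[of "{..<length w}" "I \<union> J"] by simp
  ultimately show ?thesis using IJ(1) by linarith
qed

lemma LT_kn_le:
  assumes "length w = n" "set w \<subseteq> {1..k}"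
  shows "LT_kn k n \<le> LT w"
proof -
  have eq: "{LT w | w. length w = n \<and> set w \<subseteq> {1..k}} = LT ` {w. set w \<subseteq> {1..k} \<and> length w = n}" by auto
  have "finite {w. set w \<subseteq> {1..k} \<and> length w = n}" by (rule finite_lists_length_eq) simp
  hence "finite (LT ` {w. set w \<subseteq> {1..k} \<and> length w = n})" by simp
  thus ?thesis unfolding LT_kn_def eq using assms by (intro Min_le) auto
qed

lemma const_small_o: "(\<lambda>n::nat. (E::real)) \<in> o[at_top](\<lambda>n. real n)"
proof (rule smalloI_tendsto)
  show "((\<lambda>n::nat. E / real n) \<longlongrightarrow> 0) at_top" by (rule lim_const_over_n)
  show "\<forall>\<^sub>F n in at_top. real n \<noteq> 0" using eventually_gt_at_top[of "0::nat"] by (auto elim: eventually_mono)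
qed

theorem theorem8:
  fixes C :: real
  assumes hyp: "\<forall>k::nat. k \<ge> 1 \<and> 2 * k \<le> fact k \<longrightarrow>
                   real (LCS2_perms (2 * k) k) \<le> C * real k powr (1/3)"
  shows "\<forall>k::nat. k \<ge> 2 \<longrightarrow>
           (\<exists>g. g \<in> o[at_top](\<lambda>n. real n) \<and>
              (\<forall>n. real (LT_kn k n) \<le> 6 * C * real k powr (-2/3) * real n + g n))"
proof (intro allI impI)
  fix k :: nat assume k2: "k \<ge> 2"
  have hypL: "\<forall>K\<ge>3. real (LCS2_perms (2*K) K) \<le> C * real K powr (1/3)"
    using hyp fact_ge_2k by auto
  have h3: "1 \<le> C * real 3 powr (1/3)"
    using hypL LCS2_ge1[of 3] by (metis le_refl of_nat_1 of_nat_le_iff order_trans)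
  have p3: "0 < real 3 powr (1/3)" by simp
  have C0: "0 < C"
  proof (rule ccontr)
    assume "\<not> 0 < C"
    hence "C * real 3 powr (1/3) \<le> 0" using p3 by (simp add: mult_nonpos_nonneg)
    with h3 show False by simp
  qed
  show "\<exists>g. g \<in> o[at_top](\<lambda>n. real n) \<and>
              (\<forall>n. real (LT_kn k n) \<le> 6 * C * real k powr (-2/3) * real n + g n)"
  proof (cases "k \<ge> 3")
    case True
    have "\<forall>K. \<exists>\<sigma>. K \<ge> 3 \<longrightarrow> good \<sigma> K" using good_exists by blast
    then obtain \<Sigma> where "\<forall>K. K \<ge> 3 \<longrightarrow> good (\<Sigma> K) K" by metis
    hence G: "\<forall>K'\<ge>3. good (\<Sigma> K') K'" by blast
    obtain E where E: "E \<ge> 0" "\<forall>m P. saln (wd \<Sigma> k m) P \<longrightarrow> real (card P) \<le> 6 * C * real k powr (-2/3) * real m + E"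
      using claimB[OF G hypL _ True] C0 by auto
    have "\<forall>n. real (LT_kn k n) \<le> 6 * C * real k powr (-2/3) * real n + E"
    proof
      fix n
      have w: "length (wd \<Sigma> k n) = n" "set (wd \<Sigma> k n) \<subseteq> {1..k}" using wd_props[OF G True] by auto
      obtain P where P: "saln (wd \<Sigma> k n) P" "card P = LT (wd \<Sigma> k n)" using LT_witness by blast
      have "real (LT_kn k n) \<le> real (LT (wd \<Sigma> k n))" using LT_kn_le[OF w] by simp
      also have "\<dots> = real (card P)" using P(2) by simp
      also have "\<dots> \<le> 6 * C * real k powr (-2/3) * real n + E" using E(2) P(1) by blast
      finally show "real (LT_kn k n) \<le> 6 * C * real k powr (-2/3) * real n + E" .
    qed
    then show ?thesis using const_small_o[of E] by blast
  next
    case False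
    hence k: "k = 2" using k2 by simp
    have "real 3 powr (1/3) \<le> real 3 powr 1" by (intro powr_mono) auto
    hence "real 3 powr (1/3) \<le> 3" by simp
    hence "C * real 3 powr (1/3) \<le> C * 3" using C0 by (intro mult_left_mono) auto
    hence "1 \<le> C * 3" using h3 by linarith
    have r: "(2::real) powr (-2/3) \<ge> 1/2" using r_bounds by simp
    have cge: "1 \<le> 6 * C * real k powr (-2/3)"
    proof -
      have "6 * C * (1/2) \<le> 6 * C * real k powr (-2/3)" using r k C0 by (intro mult_left_mono) auto
      thus ?thesis using \<open>1 \<le> C * 3\<close> by linarith
    qed
    have "\<forall>n. real (LT_kn k n) \<le> 6 * C * real k powr (-2/3) * real n + 0"
    proof
      fix n
      let ?w = "replicate n (1::nat)"
      have w: "length ?w = n" "set ?w \<subseteq> {1..k}" using k by auto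
      have "real (LT_kn k n) \<le> real (LT ?w)" using LT_kn_le[OF w] by simp
      also have "\<dots> \<le> real n" using LT_half[of ?w] by simp
      also have "\<dots> \<le> 6 * C * real k powr (-2/3) * real n"
        using cge mult_right_mono[of 1 "6 * C * real k powr (-2/3)" "real n"] by simp
      finally show "real (LT_kn k n) \<le> 6 * C * real k powr (-2/3) * real n + 0" by simp
    qed
    then show ?thesis using const_small_o[of 0] by blast
  qed
qed

end
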